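(* Let $d\ge 1$, $\mathbf{n}=(n_1,\ldots,n_d)$ be positive integers, and let $\mathbf{M}=\{\mathbf{m}^{(1)},\ldots,\mathbf{m}^{(d)}\}$ be a blocking of $\mathcal{A}\in\mathbb{R}^{n_1\times\cdots\times n_d}$ with $\mathbf{m}^{(k)}=[m^{(k)}_1,\ldots,m^{(k)}_{b_k}]$ for $k=1,\ldots,d$, and write $\mathbf{b}=(b_1,\ldots,b_d)$. For $k=1,\ldots,d$ set $N_k=n_1\cdots n_k$ and $\mathbf{M}_k=\{\mathbf{m}^{(1)},\ldots,\mathbf{m}^{(k)}\}$ (a blocking of tensors of size $n_1\times\cdots\times n_k$), and define \[ Q_k=\begin{cases} I_{N_d} & k=1,\\ I_{N_d/N_k}\otimes \Gamma^{(k)} & 1<k\le d,\end{cases} \] where $N_d/N_k=n_{k+1}\cdots n_d$, $\Gamma^{(k)}=\mathrm{diag}(\Gamma^{(k)}_1,\ldots,\Gamma^{(k)}_{b_k})$, and \[ \Gamma^{(k)}_j=\mathrm{diag}\big(\ldots,\Pi_{\mathrm{vol}_{\mathbf{M}_{k-1}}(\mathbf{i}),\,m^{(k)}_j},\ldots\big)\cdot \Pi_{m^{(k)}_j,\,N_{k-1}}, \] the block diagonal matrix having one diagonal block for each multi-index $\mathbf{1}\le\mathbf{i}\le\mathbf{b}(1:k-1)$, with the diagonal blocks ordered by increasing $\mathrm{ivec}(\mathbf{i},\mathbf{b}(1:k-1))$. Then the permutation matrix $P_{\mathbf{M}}=Q_dQ_{d-1}\cdots Q_2Q_1$ satisfies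 \[ \mathrm{vec}_{\mathbf{M}}(\mathcal{A})=P_{\mathbf{M}}\,\mathrm{vec}(\mathcal{A}). \]
   Context: Multi-index conventions: for integer vectors $\mathbf{i},\mathbf{j}$ of equal length, $\mathbf{i}\le\mathbf{j}$ means componentwise; $\mathbf{1}$ is the all-ones vector; $\mathbf{b}(1:k-1)=(b_1,\ldots,b_{k-1})$. For $\mathbf{n}=(n_1,\ldots,n_d)$ and $\mathbf{1}\le\mathbf{i}\le\mathbf{n}$, $\mathrm{ivec}(\mathbf{i},\mathbf{n})=i_1+(i_2-1)n_1+(i_3-1)n_1n_2+\cdots+(i_d-1)n_1\cdots n_{d-1}$. For $\mathcal{A}\in\mathbb{R}^{n_1\times\cdots\times n_d}$, $\mathrm{vec}(\mathcal{A})\in\mathbb{R}^{n_1\cdots n_d}$ is the column vector with entry $\mathrm{ivec}(\mathbf{i},\mathbf{n})$ equal to $\mathcal{A}(\mathbf{i})$ (for matrices, it stacks columns). Perfect shuffle: for positive integers $q,r$ and $s=qr$, $\Pi_{q,r}\in\mathbb{R}^{s\times s}$ is the permutation matrix with $\Pi_{q,r}z=[z(1:r:s);z(2:r:s);\ldots;z(r:r:s)]$ for $z\in\mathbb{R}^s$, where $a:c:b$ denotes $a,a+c,a+2c,\ldots$ up to $b$. $\otimes$ is the Kronecker product and $\mathrm{diag}(\cdot)$ the block diagonal matrix. A blocking of $\mathcal{A}\in\mathbb{R}^{n_1\times\cdots\times n_d}$ is a collection $\mathbf{M}=\{\mathbf{m}^{(1)},\ldots,\mathbf{m}^{(d)}\}$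 where $\mathbf{m}^{(k)}=[m^{(k)}_1,\ldots,m^{(k)}_{b_k}]$ is a vector of positive integers summing to $n_k$. With $\ell^{(k)}_j=m^{(k)}_1+\cdots+m^{(k)}_{j-1}+1$ and $u^{(k)}_j=m^{(k)}_1+\cdots+m^{(k)}_j$, the block $\mathbf{i}$ ($\mathbf{1}\le\mathbf{i}\le\mathbf{b}$) is $\mathcal{A}_{\mathbf{i}}=\mathcal{A}(\ell^{(1)}_{i_1}:u^{(1)}_{i_1},\ldots,\ell^{(d)}_{i_d}:u^{(d)}_{i_d})$, and $\mathrm{vol}_{\mathbf{M}}(\mathbf{i})=m^{(1)}_{i_1}\cdots m^{(d)}_{i_d}$ (for $\mathbf{M}_0$, the empty blocking, $\mathrm{vol}=1$ and $N_0=1$). $\mathrm{vec}_{\mathbf{M}}(\mathcal{A})$ is the vector obtained by stacking $\mathrm{vec}(\mathcal{A}_{\mathbf{i}})$ over all $\mathbf{1}\le\mathbf{i}\le\mathbf{b}$, in order of increasing $\mathrm{ivec}(\mathbf{i},\mathbf{b})$. *)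

theory Defs
  imports "Jordan_Normal_Form.Matrix"
begin

text \<open>Sizes, multi-indices and blockings are lists; multi-indices are
1-based as in the paper. A tensor of size n = [n_1,...,n_d] is a function
nat list => real, of which only the values on multi-indices 1 <= i <= n matter.
Matrices and vectors are Jordan_Normal_Form matrices/vectors (0-based internally);
entry p (1-based) of the paper corresponds to entry p-1 here.\<close>

definition in_box :: "nat list \<Rightarrow> nat list \<Rightarrow> bool" where
  "in_box i n \<longleftrightarrow> length i = length n \<and> (\<forall>k<length n. 1 \<le> i!k \<and> i!k \<le> n!k)"

definition ivec :: "nat list \<Rightarrow> nat list \<Rightarrow> nat" where
  "ivec i n = 1 + (\<Sum>k<length n. (i!k - 1) * prod_list (take k n))"

text \<open>The multi-index i (1 <= i <= n) with ivec(i,n) = p+1 (inverse of ivec).\<close>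
definition idx_of :: "nat \<Rightarrow> nat list \<Rightarrow> nat list" where
  "idx_of p n = map (\<lambda>k. (p div prod_list (take k n)) mod (n!k) + 1) [0..<length n]"

text \<open>vec(A): the vector of length n_1...n_d whose entry ivec(i,n) is A(i).\<close>
definition tvec :: "(nat list \<Rightarrow> real) \<Rightarrow> nat list \<Rightarrow> real vec" where
  "tvec A n = vec (prod_list n) (\<lambda>p. A (idx_of p n))"

definition is_blocking :: "nat list list \<Rightarrow> nat list \<Rightarrow> bool" where
  "is_blocking M n \<longleftrightarrow> length M = length n \<and>
     (\<forall>k<length n. (\<forall>x\<in>set (M!k). 0 < x) \<and> sum_list (M!k) = n!k)"

definition nblocks :: "nat list list \<Rightarrow> nat list" where
  "nblocks M = map length M"

definition lower :: "nat list list \<Rightarrow> nat \<Rightarrow> nat \<Rightarrow> nat" where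
  "lower M k j = sum_list (take (j - 1) (M!(k - 1))) + 1"

definition bsize :: "nat list list \<Rightarrow> nat list \<Rightarrow> nat list" where
  "bsize M i = map (\<lambda>k. M!k!(i!k - 1)) [0..<length M]"

definition vol :: "nat list list \<Rightarrow> nat list \<Rightarrow> nat" where
  "vol M i = prod_list (bsize M i)"

definition tblock :: "(nat list \<Rightarrow> real) \<Rightarrow> nat list list \<Rightarrow> nat list \<Rightarrow> (nat list \<Rightarrow> real)" where
  "tblock A M i = (\<lambda>j. A (map (\<lambda>k. lower M (Suc k) (i!k) + j!k - 1) [0..<length M]))"

definition vecM :: "(nat list \<Rightarrow> real) \<Rightarrow> nat list list \<Rightarrow> real vec" where
  "vecM A M = vec_of_list (concat (map (\<lambda>p. let i = idx_of p (nblocks M) in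
        list_of_vec (tvec (tblock A M i) (bsize M i))) [0..<prod_list (nblocks M)]))"

text \<open>Perfect shuffle Pi_{q,r}: (Pi z) = [z(1:r:s); z(2:r:s); ...; z(r:r:s)], s = q r.\<close>
definition perfect_shuffle :: "nat \<Rightarrow> nat \<Rightarrow> real mat" where
  "perfect_shuffle q r = mat (q*r) (q*r) (\<lambda>(i,j). if j = i div q + (i mod q) * r then 1 else 0)"

definition kron :: "real mat \<Rightarrow> real mat \<Rightarrow> real mat" where
  "kron A B = mat (dim_row A * dim_row B) (dim_col A * dim_col B)
     (\<lambda>(i,j). A $$ (i div dim_row B, j div dim_col B) * B $$ (i mod dim_row B, j mod dim_col B))"

definition Nk :: "nat list \<Rightarrow> nat \<Rightarrow> nat" where
  "Nk n k = prod_list (take k n)"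

definition Gamma_j :: "nat list \<Rightarrow> nat list list \<Rightarrow> nat \<Rightarrow> nat \<Rightarrow> real mat" where
  "Gamma_j n M k j = (let mkj = M!(k-1)!(j-1); bk = take (k-1) (nblocks M) in
     diag_block_mat (map (\<lambda>p. perfect_shuffle (vol (take (k-1) M) (idx_of p bk)) mkj)
                         [0..<prod_list bk])
     * perfect_shuffle mkj (Nk n (k-1)))"

definition Gamma :: "nat list \<Rightarrow> nat list list \<Rightarrow> nat \<Rightarrow> real mat" where
  "Gamma n M k = diag_block_mat (map (\<lambda>j. Gamma_j n M k j) [1..<length (M!(k-1)) + 1])"

definition Qk :: "nat list \<Rightarrow> nat list list \<Rightarrow> nat \<Rightarrow> real mat" where
  "Qk n M k = (if k = 1 then 1\<^sub>m (Nk n (length n))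
               else kron (1\<^sub>m (Nk n (length n) div Nk n k)) (Gamma n M k))"

fun Qprod :: "nat list \<Rightarrow> nat list list \<Rightarrow> nat \<Rightarrow> real mat" where
  "Qprod n M 0 = 1\<^sub>m (Nk n (length n))"
| "Qprod n M (Suc 0) = Qk n M 1"
| "Qprod n M (Suc (Suc k)) = Qk n M (Suc (Suc k)) * Qprod n M (Suc k)"

definition PM :: "nat list \<Rightarrow> nat list list \<Rightarrow> real mat" where
  "PM n M = Qprod n M (length n)"

end

theory Submission
  imports Defs
begin


definition mvl :: "real mat \<Rightarrow> real list \<Rightarrow> real list" where
  "mvl B xs = list_of_vec (B *\<^sub>v vec_of_list xs)"

lemma vec_of_list_append: "vec_of_list (xs @ ys) = vec_of_list xs @\<^sub>v vec_of_list ys"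
  by (rule eq_vecI) (auto simp: vec_of_list_index nth_append)

lemma length_mvl[simp]: "length (mvl B xs) = dim_row B"
  unfolding mvl_def by simp

lemma mvl_one: "mvl (1\<^sub>m (length xs)) xs = xs"
proof -
  have c: "vec_of_list xs \<in> carrier_vec (length xs)" by (intro carrier_vecI) simp
  show ?thesis unfolding mvl_def one_mult_mat_vec[OF c] list_vec by (rule refl)
qed

lemma mvl_mult: "B \<in> carrier_mat s s \<Longrightarrow> C \<in> carrier_mat s s \<Longrightarrow> length xs = s \<Longrightarrow>
   mvl (B * C) xs = mvl B (mvl C xs)"
proof -
  assume a: "B \<in> carrier_mat s s" "C \<in> carrier_mat s s" "length xs = s"
  have c: "vec_of_list xs \<in> carrier_vec s" using a(3) by (intro carrier_vecI) simp
  show ?thesis unfolding mvl_def assoc_mult_mat_vec[OF a(1,2) c] vec_list by (rule refl)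
qed

lemma mvl_diag:
  assumes "\<forall>B\<in>set Bs. dim_row B = dim_col B"
    and "map length xss = map dim_row Bs"
  shows "mvl (diag_block_mat Bs) (concat xss) = concat (map2 mvl Bs xss)"
  using assms
proof (induction Bs arbitrary: xss)
  case Nil
  then have "xss = []" by simp
  moreover have "length (mvl (0\<^sub>m 0 0) []) = 0" by (simp only: length_mvl index_zero_mat(2))
  then have "mvl (0\<^sub>m 0 0) [] = []" by (simp only: length_0_conv)
  ultimately show ?case by simp
next
  case (Cons B Bs)
  obtain xs xss' where xss: "xss = xs # xss'" using Cons.prems(2) by (cases xss) simp_all
  let ?D = "diag_block_mat Bs"
  have D: "?D \<in> carrier_mat (sum_list (map dim_row Bs)) (sum_list (map dim_row Bs))"
  proof -
    have h: "map dim_col Bs = map dim_row Bs" using Cons.prems(1) by (simp add: map_eq_conv)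
    show ?thesis by (intro carrier_matI) (simp_all only: dim_diag_block_mat h)
  qed
  have B: "B \<in> carrier_mat (dim_row B) (dim_row B)" using Cons.prems(1) by (intro carrier_matI) simp_all
  have lx: "length xs = dim_row B" using Cons.prems(2) xss by simp
  have lm: "map length xss' = map dim_row Bs" using Cons.prems(2) xss by simp
  have l: "length (concat xss') = sum_list (map dim_row Bs)"
    by (simp add: length_concat lm)
  have IH: "mvl ?D (concat xss') = concat (map2 mvl Bs xss')"
    by (rule Cons.IH) (use Cons.prems(1) lm in auto)
  have cx: "vec_of_list xs \<in> carrier_vec (dim_row B)" using lx by (intro carrier_vecI) simp
  have cy: "vec_of_list (concat xss') \<in> carrier_vec (sum_list (map dim_row Bs))" using l by (intro carrier_vecI) simp
  have e1: "diag_block_mat (B # Bs) = four_block_mat B (0\<^sub>m (dim_row B) (sum_list (map dim_row Bs))) (0\<^sub>m (sum_list (map dim_row Bs)) (dim_row B)) ?D"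
  proof -
    have dB: "dim_col B = dim_row B" using B by (rule carrier_matD)
    have dD1: "dim_row ?D = sum_list (map dim_row Bs)" using D by (rule carrier_matD)
    have dD2: "dim_col ?D = sum_list (map dim_row Bs)" using D by (rule carrier_matD)
    show ?thesis by (simp only: diag_block_mat.simps Let_def dB dD1 dD2)
  qed
  have "mvl (diag_block_mat (B # Bs)) (concat xss) = list_of_vec (B *\<^sub>v vec_of_list xs @\<^sub>v ?D *\<^sub>v vec_of_list (concat xss'))"
    unfolding mvl_def e1 xss concat.simps vec_of_list_append mult_mat_vec_split[OF B D cx cy] by (rule refl)
  also have "\<dots> = mvl B xs @ mvl ?D (concat xss')" by (simp add: mvl_def)
  finally show ?case using IH xss by simp
qed



lemma nth_concat_off:
  "p < length Ls \<Longrightarrow> u < length (Ls!p) \<Longrightarrow>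
   concat Ls ! (sum_list (map length (take p Ls)) + u) = Ls!p!u"
proof (induction Ls arbitrary: p)
  case Nil then show ?case by simp
next
  case (Cons L Ls)
  show ?case
  proof (cases p)
    case 0 then show ?thesis using Cons.prems by (simp add: nth_append)
  next
    case (Suc p')
    have "concat (L # Ls) ! (sum_list (map length (take p (L # Ls))) + u)
        = concat Ls ! (sum_list (map length (take p' Ls)) + u)"
      using Suc by (simp add: nth_append add.assoc)
    also have "\<dots> = Ls ! p' ! u" using Cons Suc by simp
    finally show ?thesis using Suc by simp
  qed
qed

lemma sum_take_uniform:
  "\<forall>w\<in>set xss. length w = r \<Longrightarrow> a \<le> length xss \<Longrightarrow> sum_list (map length (take a xss)) = a * r"
proof (induction xss arbitrary: a)
  case Nil then show ?case by simp
next
  case (Cons x xss) then show ?case by (cases a) auto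
qed

lemma nth_concat_uniform:
  assumes "\<forall>w\<in>set xss. length w = r" "a < length xss" "b < r"
  shows "concat xss ! (a * r + b) = xss!a!b"
proof -
  have "sum_list (map length (take a xss)) = a * r" using assms by (intro sum_take_uniform) auto
  moreover have "b < length (xss!a)" using assms by auto
  ultimately show ?thesis using nth_concat_off[of a xss b] assms(2) by simp
qed

lemma regroup:
  "map f [0..<sum_list ls] =
   concat (map (\<lambda>p. map (\<lambda>u. f (sum_list (take p ls) + u)) [0..<ls!p]) [0..<length ls])"
proof (induction ls arbitrary: f)
  case Nil then show ?case by simp
next
  case (Cons l ls)
  have "[0..<sum_list (l # ls)] = [0..<l] @ map (\<lambda>x. l + x) [0..<sum_list ls]"
    by (simp add: upt_add_eq_append[of 0 l] map_add_upt add.commute)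
  then have "map f [0..<sum_list (l # ls)] = map f [0..<l] @ map (\<lambda>x. f (l + x)) [0..<sum_list ls]"
    by simp
  also have "map (\<lambda>x. f (l + x)) [0..<sum_list ls] =
     concat (map (\<lambda>p. map (\<lambda>u. f (l + (sum_list (take p ls) + u))) [0..<ls!p]) [0..<length ls])"
    using Cons.IH[of "\<lambda>x. f (l + x)"] by simp
  also have "\<dots> = concat (map (\<lambda>p. map (\<lambda>u. f (sum_list (take p (l#ls)) + u)) [0..<(l#ls)!p]) (map Suc [0..<length ls]))"
    by (simp add: add.assoc comp_def)
  finally show ?case
    by (simp only: length_Cons upt_conv_Cons[of 0 "Suc (length ls)"] map_Suc_upt[symmetric])
       (simp add: upt_conv_Cons)
qed

lemma range_split:
  "[0..<b*P] = concat (map (\<lambda>j. map (\<lambda>p. p + j*P) [0..<P]) [0..<b])"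
proof (induction b)
  case 0 then show ?case by simp
next
  case (Suc b)
  have "[0..<Suc b * P] = [0..<b*P + P]" by (simp add: add.commute)
  also have "\<dots> = [0..<b*P] @ [b*P..<b*P + P]" by (rule upt_add_eq_append) simp
  also have "[b*P..<b*P + P] = map (\<lambda>p. p + b*P) [0..<P]"
    by (simp add: map_add_upt add.commute)
  finally show ?case using Suc by simp
qed

lemma map_range_split:
  "map f [0..<b*P] = concat (map (\<lambda>j. map (\<lambda>p. f (p + j*P)) [0..<P]) [0..<b])"
  by (simp add: range_split map_concat comp_def)

lemma mvl_perm:
  assumes "\<forall>i<s. f i < s" "length xs = s"
  shows "mvl (mat s s (\<lambda>(i,j). if j = f i then 1 else 0)) xs = map (\<lambda>i. xs ! f i) [0..<s]"
proof (rule nth_equalityI)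
  show "length (mvl (mat s s (\<lambda>(i, j). if j = f i then 1 else 0)) xs) = length (map (\<lambda>i. xs ! f i) [0..<s])"
    by simp
  fix i assume "i < length (mvl (mat s s (\<lambda>(i, j). if j = f i then 1 else 0)) xs)"
  then have i: "i < s" by simp
  have "mvl (mat s s (\<lambda>(i, j). if j = f i then 1 else 0)) xs ! i
     = (\<Sum>j\<in>{0..<s}. (if j = f i then 1 else 0) * xs ! j)"
    unfolding mvl_def using i assms(2)
    by (simp add: list_of_vec_index scalar_prod_def vec_of_list_index)
  also have "\<dots> = xs ! f i" using assms(1) i
    by (simp add: if_distrib[of "\<lambda>x. x * _"] cong: if_cong)
  finally show "mvl (mat s s (\<lambda>(i, j). if j = f i then 1 else 0)) xs ! i = map (\<lambda>i. xs ! f i) [0..<s] ! i"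
    using i by simp
qed

lemma mvl_ps:
  assumes "length xss = q" "\<forall>w\<in>set xss. length w = r"
  shows "mvl (perfect_shuffle q r) (concat xss) = concat (map (\<lambda>b. map (\<lambda>a. xss!a!b) [0..<q]) [0..<r])"
proof -
  have lc: "length (concat xss) = q * r" using assms sum_take_uniform[of xss r q]
    by (simp add: length_concat)
  have f: "\<forall>i<q*r. i div q + (i mod q)*r < q*r"
  proof (intro allI impI)
    fix i assume i: "i < q*r"
    then have q: "0 < q" by (cases q) auto
    have "i div q < r" using i q by (simp add: div_less_iff_less_mult mult.commute)
    moreover have "i mod q < q" using q by simp
    then have "Suc (i mod q) * r \<le> q * r" by (intro mult_le_mono1) simp
    ultimately show "i div q + (i mod q)*r < q*r" by simp
  qed
  have "mvl (perfect_shuffle q r) (concat xss) = map (\<lambda>i. concat xss ! (i div q + (i mod q)*r)) [0..<q*r]"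
    unfolding perfect_shuffle_def using mvl_perm[OF f lc] by simp
  also have "\<dots> = map (\<lambda>i. concat xss ! (i div q + (i mod q)*r)) [0..<r*q]" by (simp add: mult.commute)
  also have "\<dots> = concat (map (\<lambda>b. map (\<lambda>a. concat xss ! ((a + b*q) div q + ((a + b*q) mod q)*r)) [0..<q]) [0..<r])"
    by (rule map_range_split)
  also have "\<dots> = concat (map (\<lambda>b. map (\<lambda>a. xss!a!b) [0..<q]) [0..<r])"
  proof -
    have "concat xss ! ((a + b*q) div q + ((a + b*q) mod q)*r) = xss!a!b" if "a < q" "b < r" for a b
    proof -
      have "(a + b*q) div q = b" "(a + b*q) mod q = a" using that by auto
      then show ?thesis using nth_concat_uniform[OF assms(2), of a b] assms(1) that
        by (simp add: add.commute)
    qed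
    then show ?thesis by (intro arg_cong[where f=concat] map_cong refl) auto
  qed
  finally show ?thesis .
qed


lemma kron_diag:
  assumes B: "B \<in> carrier_mat s s"
  shows "kron (1\<^sub>m a) B = diag_block_mat (replicate a B)"
proof (induction a)
  case 0
  show ?case by (rule eq_matI) (auto simp: kron_def)
next
  case (Suc a)
  have dB: "dim_row B = s" "dim_col B = s" using B by auto
  let ?D = "diag_block_mat (replicate a B)"
  have dD: "dim_row ?D = a * s" "dim_col ?D = a * s"
    using Suc.IH[symmetric] dB by (simp_all add: kron_def)
  have e: "diag_block_mat (replicate (Suc a) B) = four_block_mat B (0\<^sub>m s (a*s)) (0\<^sub>m (a*s) s) ?D"
    by (simp only: replicate_Suc diag_block_mat.simps Let_def dB dD)
  show ?case unfolding e
  proof (rule eq_matI)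
    show "dim_row (kron (1\<^sub>m (Suc a)) B) = dim_row (four_block_mat B (0\<^sub>m s (a * s)) (0\<^sub>m (a * s) s) ?D)"
      using dB dD by (simp add: kron_def)
    show "dim_col (kron (1\<^sub>m (Suc a)) B) = dim_col (four_block_mat B (0\<^sub>m s (a * s)) (0\<^sub>m (a * s) s) ?D)"
      using dB dD by (simp add: kron_def)
    fix i j assume i: "i < dim_row (four_block_mat B (0\<^sub>m s (a * s)) (0\<^sub>m (a * s) s) ?D)"
      and j: "j < dim_col (four_block_mat B (0\<^sub>m s (a * s)) (0\<^sub>m (a * s) s) ?D)"
    then have i': "i < s + a*s" and j': "j < s + a*s" using dB dD by auto
    then have s: "0 < s" by (cases s) auto
    have L: "kron (1\<^sub>m (Suc a)) B $$ (i,j) = 1\<^sub>m (Suc a) $$ (i div s, j div s) * B $$ (i mod s, j mod s)"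
      using i' j' dB by (simp add: kron_def)
    have R: "four_block_mat B (0\<^sub>m s (a * s)) (0\<^sub>m (a * s) s) ?D $$ (i,j) =
      (if i < s then if j < s then B $$ (i,j) else 0
       else if j < s then 0 else ?D $$ (i - s, j - s))"
      using i' j' dB dD by simp
    have ids: "i div s < Suc a" "j div s < Suc a" using i' j' s
      by (simp_all add: div_less_iff_less_mult)
    show "kron (1\<^sub>m (Suc a)) B $$ (i,j) = four_block_mat B (0\<^sub>m s (a * s)) (0\<^sub>m (a * s) s) ?D $$ (i,j)"
    proof (cases "i < s")
      case True
      then show ?thesis
      proof (cases "j < s")
        case True then show ?thesis using L R `i < s` ids by simp
      next
        case False
        then have "j div s \<noteq> 0" using s by (simp add: div_eq_0_iff)
        then show ?thesis using L R `i < s` False ids by simp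
      qed
    next
      case False
      then have idv: "i div s \<noteq> 0" using s by (simp add: div_eq_0_iff)
      show ?thesis
      proof (cases "j < s")
        case True
        then show ?thesis using L R False ids idv by simp
      next
        case jF: False
        have i2: "i - s < a*s" "j - s < a*s" using i' j' False jF by auto
        have "?D $$ (i - s, j - s) = kron (1\<^sub>m a) B $$ (i - s, j - s)" using Suc.IH by simp
        also have "\<dots> = 1\<^sub>m a $$ ((i-s) div s, (j-s) div s) * B $$ ((i-s) mod s, (j-s) mod s)"
          using i2 dB by (simp add: kron_def)
        also have "\<dots> = 1\<^sub>m (Suc a) $$ (i div s, j div s) * B $$ (i mod s, j mod s)"
        proof -
          have "(i - s) div s = i div s - 1" "(j - s) div s = j div s - 1"
            using False jF s by (simp_all add: le_div_geq)
          moreover have "(i - s) mod s = i mod s" "(j - s) mod s = j mod s"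
            using False jF s by (simp_all add: le_mod_geq)
          moreover have "(i-s) div s < a" "(j-s) div s < a" using i2 s
            by (simp_all add: div_less_iff_less_mult)
          moreover have "i div s \<noteq> 0" "j div s \<noteq> 0" using False jF s by (simp_all add: div_eq_0_iff)
          ultimately show ?thesis using ids by auto
        qed
        finally show ?thesis using L R False jF by simp
      qed
    qed
  qed
qed

lemma mvl_kron:
  assumes B: "B \<in> carrier_mat s s" and "length xss = a" "\<forall>w\<in>set xss. length w = s"
  shows "mvl (kron (1\<^sub>m a) B) (concat xss) = concat (map (mvl B) xss)"
proof -
  have "mvl (diag_block_mat (replicate a B)) (concat xss) = concat (map2 mvl (replicate a B) xss)"
  proof (rule mvl_diag)
    show "\<forall>C\<in>set (replicate a B). dim_row C = dim_col C" using B by auto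
    show "map length xss = map dim_row (replicate a B)" using assms
      by (intro nth_equalityI) auto
  qed
  moreover have "map2 mvl (replicate a B) xss = map (mvl B) xss" using assms(2)
    by (intro nth_equalityI) auto
  ultimately show ?thesis using kron_diag[OF B] by simp
qed

lemma kron_carrier: "B \<in> carrier_mat s s \<Longrightarrow> kron (1\<^sub>m a) B \<in> carrier_mat (a*s) (a*s)"
  by (auto simp: kron_def)



lemma prod_take_drop: "prod_list xs = prod_list (take k xs) * prod_list (drop k xs)"
  by (metis append_take_drop_id prod_list.append)

lemma length_idx_of[simp]: "length (idx_of p ns) = length ns"
  by (simp add: idx_of_def)

lemma nth_idx_of: "k < length ns \<Longrightarrow> idx_of p ns ! k = p div prod_list (take k ns) mod ns!k + 1"
  by (simp add: idx_of_def)

lemma idx_of_Nil[simp]: "idx_of p [] = []"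
  by (simp add: idx_of_def)

lemma idx_of_cons:
  assumes "a < h"
  shows "idx_of (a + b*h) (h # ns) = (a+1) # idx_of b ns"
proof (rule nth_equalityI)
  show "length (idx_of (a + b * h) (h # ns)) = length ((a + 1) # idx_of b ns)" by simp
  fix k assume "k < length (idx_of (a + b * h) (h # ns))"
  then have k: "k < Suc (length ns)" by simp
  have h: "0 < h" using assms by simp
  show "idx_of (a + b * h) (h # ns) ! k = ((a + 1) # idx_of b ns) ! k"
  proof (cases k)
    case 0 then show ?thesis using assms by (simp add: nth_idx_of)
  next
    case (Suc k')
    have "(a + b*h) div (h * prod_list (take k' ns)) = b div prod_list (take k' ns)"
      using assms h by (simp add: div_mult2_eq)
    then show ?thesis using Suc k by (simp add: nth_idx_of)
  qed
qed

lemma prod_pos: "a < prod_list (xs::nat list) \<Longrightarrow> x \<in> set xs \<Longrightarrow> 0 < x"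
proof (rule ccontr)
  assume "a < prod_list xs" "x \<in> set xs" "\<not> 0 < x"
  then have "0 \<in> set xs" by simp
  then have "prod_list xs = 0" by (simp add: prod_list_zero_iff)
  then show False using \<open>a < prod_list xs\<close> by simp
qed

lemma idx_of_snoc:
  assumes a: "a < prod_list xs" and b: "b < h"
  shows "idx_of (a + b * prod_list xs) (xs @ [h]) = idx_of a xs @ [b+1]"
proof (rule nth_equalityI)
  show "length (idx_of (a + b * prod_list xs) (xs @ [h])) = length (idx_of a xs @ [b + 1])" by simp
  fix k assume "k < length (idx_of (a + b * prod_list xs) (xs @ [h]))"
  then have k: "k < Suc (length xs)" by simp
  show "idx_of (a + b * prod_list xs) (xs @ [h]) ! k = (idx_of a xs @ [b + 1]) ! k"
  proof (cases "k < length xs")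
    case True
    let ?T = "prod_list (take k xs)"
    have T: "0 < ?T" using a prod_pos[OF a] by (metis in_set_takeD gr0I prod_list_zero_iff)
    have xk: "0 < xs!k" using prod_pos[OF a] True by simp
    have "prod_list xs = ?T * (xs!k * prod_list (drop (Suc k) xs))"
      using prod_take_drop[of xs k] Cons_nth_drop_Suc[OF True] by (metis prod_list.Cons)
    then have "a + b * prod_list xs = a + (b * (xs!k * prod_list (drop (Suc k) xs))) * ?T"
      by (simp add: ac_simps)
    then have "(a + b * prod_list xs) div ?T = a div ?T + b * (xs!k * prod_list (drop (Suc k) xs))"
      using T by (simp only: div_mult_self1)
    moreover have "b * (xs!k * prod_list (drop (Suc k) xs)) = (b * prod_list (drop (Suc k) xs)) * xs!k"
      by simp
    ultimately have "(a + b * prod_list xs) div ?T mod xs!k = a div ?T mod xs!k"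
      by (simp only: mod_mult_self1)
    then show ?thesis using True by (simp add: nth_idx_of nth_append)
  next
    case False
    then have kk: "k = length xs" using k by simp
    have P: "0 < prod_list xs" using a by simp
    have "(a + b * prod_list xs) div prod_list xs = b" using a P by simp
    then show ?thesis using kk b by (simp add: nth_idx_of nth_append)
  qed
qed



definition blk :: "nat list list \<Rightarrow> (nat list \<Rightarrow> real) \<Rightarrow> nat list \<Rightarrow> real list" where
  "blk Mk B i = list_of_vec (tvec (tblock B Mk i) (bsize Mk i))"

definition W :: "nat list list \<Rightarrow> (nat list \<Rightarrow> real) \<Rightarrow> real list" where
  "W Mk B = concat (map (\<lambda>p. blk Mk B (idx_of p (nblocks Mk))) [0..<prod_list (nblocks Mk)])"

lemma vecM_W: "vecM B Mk = vec_of_list (W Mk B)"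
  unfolding vecM_def W_def blk_def Let_def by simp

lemma blk_eq: "blk Mk B i = map (\<lambda>u. B (map (\<lambda>k'. lower Mk (Suc k') (i!k') + idx_of u (bsize Mk i) ! k' - 1) [0..<length Mk])) [0..<vol Mk i]"
  unfolding blk_def tvec_def tblock_def vol_def by simp

lemma length_blk[simp]: "length (blk Mk B i) = vol Mk i"
  by (simp add: blk_eq)

lemma length_bsize[simp]: "length (bsize Mk i) = length Mk"
  by (simp add: bsize_def)

lemma bsize_snoc:
  assumes "k < length M" "length i = k"
  shows "bsize (take (Suc k) M) (i @ [Suc j]) = bsize (take k M) i @ [M!k!j]"
proof -
  have "bsize (take (Suc k) M) (i @ [Suc j]) = map (\<lambda>k'. take (Suc k) M ! k' ! ((i @ [Suc j]) ! k' - 1)) [0..<Suc k]"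
    using assms by (simp add: bsize_def min_absorb1)
  also have "\<dots> = map (\<lambda>k'. take (Suc k) M ! k' ! ((i @ [Suc j]) ! k' - 1)) [0..<k] @ [M!k!j]"
    using assms by (simp add: nth_append)
  also have "map (\<lambda>k'. take (Suc k) M ! k' ! ((i @ [Suc j]) ! k' - 1)) [0..<k] = bsize (take k M) i"
    using assms by (simp add: bsize_def min_absorb1 nth_append)
  finally show ?thesis .
qed

lemma vol_snoc:
  assumes "k < length M" "length i = k"
  shows "vol (take (Suc k) M) (i @ [Suc j]) = vol (take k M) i * M!k!j"
  using bsize_snoc[OF assms] by (simp add: vol_def)

lemma lower_take: "k' < kk \<Longrightarrow> kk \<le> length M \<Longrightarrow> lower (take kk M) (Suc k') x = lower M (Suc k') x"
  by (simp add: lower_def)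

lemma blk_snoc:
  assumes k: "k < length M" and i: "length i = k"
  shows "blk (take (Suc k) M) B (i @ [Suc j]) =
    concat (map (\<lambda>s. blk (take k M) (\<lambda>x. B (x @ [sum_list (take j (M!k)) + Suc s])) i) [0..<M!k!j])"
proof -
  let ?m = "M!k!j"
  let ?V = "vol (take k M) i"
  let ?bs = "bsize (take k M) i"
  let ?F = "\<lambda>u. B (map (\<lambda>k'. lower (take (Suc k) M) (Suc k') ((i @ [Suc j])!k') + idx_of u (bsize (take (Suc k) M) (i @ [Suc j])) ! k' - 1) [0..<Suc k])"
  have "blk (take (Suc k) M) B (i @ [Suc j]) = map ?F [0..<?m * ?V]"
    unfolding blk_eq vol_snoc[OF k i] using k by (simp add: min_absorb1 mult.commute)
  also have "\<dots> = concat (map (\<lambda>s. map (\<lambda>u. ?F (u + s * ?V)) [0..<?V]) [0..<?m])"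
    by (rule map_range_split)
  also have "\<dots> = concat (map (\<lambda>s. blk (take k M) (\<lambda>x. B (x @ [sum_list (take j (M!k)) + Suc s])) i) [0..<?m])"
  proof (intro arg_cong[where f=concat] map_cong refl)
    fix s assume s: "s \<in> set [0..<?m]"
    show "map (\<lambda>u. ?F (u + s * ?V)) [0..<?V] = blk (take k M) (\<lambda>x. B (x @ [sum_list (take j (M!k)) + Suc s])) i"
      unfolding blk_eq
    proof (intro map_cong)
      show "[0..<?V] = [0..<vol (take k M) i]" by simp
      fix u assume u: "u \<in> set [0..<vol (take k M) i]"
      have ix: "idx_of (u + s * ?V) (bsize (take (Suc k) M) (i @ [Suc j])) = idx_of u ?bs @ [Suc s]"
        unfolding bsize_snoc[OF k i] using idx_of_snoc[of u ?bs s ?m] u s by (simp add: vol_def)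
      have "map (\<lambda>k'. lower (take (Suc k) M) (Suc k') ((i @ [Suc j])!k') + idx_of (u + s * ?V) (bsize (take (Suc k) M) (i @ [Suc j])) ! k' - 1) [0..<Suc k]
        = map (\<lambda>k'. lower (take k M) (Suc k') (i!k') + idx_of u ?bs ! k' - 1) [0..<k] @ [sum_list (take j (M!k)) + Suc s]"
        (is "map ?G [0..<Suc k] = ?R1 @ [?R2]")
      proof -
        have A: "map ?G [0..<k] = ?R1"
          using k i by (intro map_cong refl) (simp add: ix nth_append lower_take)
        have Bf: "?G k = ?R2"
          using k i by (simp add: ix nth_append lower_def)
        have "map ?G [0..<Suc k] = map ?G [0..<k] @ [?G k]" by simp
        then show ?thesis unfolding A Bf .
      qed
      moreover have lt: "length (take k M) = k" using k by simp
      ultimately show "?F (u + s * ?V) = B (map (\<lambda>k'. lower (take k M) (Suc k') (i!k') + idx_of u ?bs ! k' - 1) [0..<length (take k M)] @ [sum_list (take j (M!k)) + Suc s])"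
        by (simp only: lt)
    qed
  qed
  finally show ?thesis .
qed



lemma nblocks_snoc: "k < length M \<Longrightarrow> nblocks (take (Suc k) M) = nblocks (take k M) @ [length (M!k)]"
  by (simp add: nblocks_def take_Suc_conv_app_nth)

lemma concat_concat_map: "concat (concat (map f xs)) = concat (map (\<lambda>x. concat (f x)) xs)"
  by (induction xs) auto

lemma W_snoc:
  assumes k: "k < length M"
  shows "W (take (Suc k) M) B = concat (map (\<lambda>j. concat (map (\<lambda>p. blk (take (Suc k) M) B (idx_of p (nblocks (take k M)) @ [Suc j])) [0..<prod_list (nblocks (take k M))])) [0..<length (M!k)])"
proof -
  let ?bs = "nblocks (take k M)"
  let ?P = "prod_list ?bs"
  let ?b = "length (M!k)"
  have "W (take (Suc k) M) B = concat (map (\<lambda>p. blk (take (Suc k) M) B (idx_of p (?bs @ [?b]))) [0..<?b * ?P])"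
    unfolding W_def nblocks_snoc[OF k] by (simp add: mult.commute)
  also have "map (\<lambda>p. blk (take (Suc k) M) B (idx_of p (?bs @ [?b]))) [0..<?b * ?P]
     = concat (map (\<lambda>j. map (\<lambda>p. blk (take (Suc k) M) B (idx_of (p + j * ?P) (?bs @ [?b]))) [0..<?P]) [0..<?b])"
    by (rule map_range_split)
  also have "\<dots> = concat (map (\<lambda>j. map (\<lambda>p. blk (take (Suc k) M) B (idx_of p ?bs @ [Suc j])) [0..<?P]) [0..<?b])"
    by (intro arg_cong[where f=concat] map_cong refl) (simp add: idx_of_snoc)
  finally show ?thesis by (simp add: concat_concat_map)
qed

lemma length_W_sum: "length (W Mk B) = sum_list (map (\<lambda>p. vol Mk (idx_of p (nblocks Mk))) [0..<prod_list (nblocks Mk)])"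
  unfolding W_def by (simp add: length_concat comp_def)

lemma length_W:
  assumes bl: "is_blocking M n" and k: "k \<le> length n"
  shows "length (W (take k M) B) = Nk n k"
  using k
proof (induction k)
  case 0
  have "W (take 0 M) B = blk [] B []" by (simp add: W_def nblocks_def)
  moreover have "vol [] [] = 1" by (simp add: vol_def bsize_def)
  ultimately show ?case by (simp add: Nk_def)
next
  case (Suc k)
  have kM: "k < length M" using Suc.prems bl by (simp add: is_blocking_def)
  let ?bs = "nblocks (take k M)"
  let ?P = "prod_list ?bs"
  have lbs: "length ?bs = k" using kM by (simp add: nblocks_def)
  have "length (W (take (Suc k) M) B) = (\<Sum>j\<leftarrow>[0..<length (M!k)]. \<Sum>p\<leftarrow>[0..<?P]. vol (take k M) (idx_of p ?bs) * M!k!j)"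
    unfolding W_snoc[OF kM] using kM lbs by (simp add: length_concat comp_def vol_snoc)
  also have "\<dots> = (\<Sum>j\<leftarrow>[0..<length (M!k)]. M!k!j * length (W (take k M) B))"
    unfolding length_W_sum by (simp add: sum_list_const_mult[symmetric] mult.commute)
  also have "\<dots> = sum_list (M!k) * Nk n k"
  proof -
    have IH: "length (W (take k M) B) = Nk n k" using Suc.IH Suc.prems by simp
    have "(\<Sum>j\<leftarrow>[0..<length (M!k)]. M!k!j * Nk n k) = (\<Sum>j\<leftarrow>[0..<length (M!k)]. M!k!j) * Nk n k"
      by (rule sum_list_mult_const)
    moreover have "map (\<lambda>j. M!k!j) [0..<length (M!k)] = M!k" by (rule map_nth)
    ultimately show ?thesis unfolding IH by simp
  qed
  also have "\<dots> = Nk n (Suc k)"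
    using bl Suc.prems by (simp add: is_blocking_def Nk_def take_Suc_conv_app_nth)
  finally show ?case .
qed



lemma map2_map_map: "map2 f (map g xs) (map h xs) = map (\<lambda>x. f (g x) (h x)) xs"
  by (induction xs) auto

lemma ps_carrier: "perfect_shuffle q r \<in> carrier_mat (q*r) (q*r)"
  by (simp add: perfect_shuffle_def)

lemma sum_vol:
  assumes bl: "is_blocking M n" and k: "k \<le> length n"
  shows "sum_list (map (\<lambda>p. vol (take k M) (idx_of p (nblocks (take k M)))) [0..<prod_list (nblocks (take k M))]) = Nk n k"
  using length_W[OF bl k, of "\<lambda>_. 0"] length_W_sum[of "take k M" "\<lambda>_. 0"] by simp

lemma Gamma_j_eq:
  assumes k: "k < length M"
  shows "Gamma_j n M (Suc k) (Suc j) =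
    diag_block_mat (map (\<lambda>p. perfect_shuffle (vol (take k M) (idx_of p (nblocks (take k M)))) (M!k!j)) [0..<prod_list (nblocks (take k M))])
    * perfect_shuffle (M!k!j) (Nk n k)"
  unfolding Gamma_j_def Let_def by (simp add: nblocks_def take_map)

lemma Gamma_j_carrier:
  assumes bl: "is_blocking M n" and k: "k < length n"
  shows "Gamma_j n M (Suc k) (Suc j) \<in> carrier_mat (M!k!j * Nk n k) (M!k!j * Nk n k)"
proof -
  have kM: "k < length M" using bl k by (simp add: is_blocking_def)
  let ?bs = "nblocks (take k M)"
  let ?D = "diag_block_mat (map (\<lambda>p. perfect_shuffle (vol (take k M) (idx_of p ?bs)) (M!k!j)) [0..<prod_list ?bs])"
  have sv: "sum_list (map (\<lambda>p. vol (take k M) (idx_of p ?bs)) [0..<prod_list ?bs]) = Nk n k"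
    using sum_vol[OF bl] k by simp
  have "dim_row ?D = sum_list (map (\<lambda>p. vol (take k M) (idx_of p ?bs) * M!k!j) [0..<prod_list ?bs])"
    by (simp add: dim_diag_block_mat comp_def perfect_shuffle_def)
  also have "\<dots> = Nk n k * M!k!j" using sv by (simp add: sum_list_mult_const)
  finally have r: "dim_row ?D = M!k!j * Nk n k" by simp
  have "dim_col ?D = sum_list (map (\<lambda>p. vol (take k M) (idx_of p ?bs) * M!k!j) [0..<prod_list ?bs])"
    by (simp add: dim_diag_block_mat comp_def perfect_shuffle_def)
  also have "\<dots> = Nk n k * M!k!j" using sv by (simp add: sum_list_mult_const)
  finally have c: "dim_col ?D = M!k!j * Nk n k" by simp
  have D: "?D \<in> carrier_mat (M!k!j * Nk n k) (M!k!j * Nk n k)" using r c by (intro carrier_matI)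
  show ?thesis unfolding Gamma_j_eq[OF kM] using mult_carrier_mat[OF D ps_carrier] .
qed



lemma Gamma_j_act:
  assumes bl: "is_blocking M n" and k: "k < length n" and j: "j < length (M!k)"
  shows "mvl (Gamma_j n M (Suc k) (Suc j))
           (concat (map (\<lambda>s. W (take k M) (\<lambda>x. B (x @ [sum_list (take j (M!k)) + Suc s]))) [0..<M!k!j]))
         = concat (map (\<lambda>p. blk (take (Suc k) M) B (idx_of p (nblocks (take k M)) @ [Suc j])) [0..<prod_list (nblocks (take k M))])"
proof -
  have kM: "k < length M" using bl k by (simp add: is_blocking_def)
  define bk where "bk = nblocks (take k M)"
  define P where "P = prod_list bk"
  define m where "m = M!k!j"
  define off where "off = sum_list (take j (M!k))"
  define N where "N = Nk n k"
  define vl where "vl = (\<lambda>p. vol (take k M) (idx_of p bk))"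
  define ls where "ls = map vl [0..<P]"
  define Bs where "Bs = (\<lambda>s x. B (x @ [off + Suc s]))"
  define Xs where "Xs = (\<lambda>s. W (take k M) (Bs s))"
  define D where "D = diag_block_mat (map (\<lambda>p. perfect_shuffle (vl p) m) [0..<P])"
  have lbk: "length bk = k" using kM by (simp add: bk_def nblocks_def)
  have sl: "sum_list ls = N" using sum_vol[OF bl, of k] k by (simp add: ls_def vl_def bk_def P_def N_def)
  have lX: "length (Xs s) = N" for s using length_W[OF bl, of k] k by (simp add: Xs_def N_def)
  have G: "Gamma_j n M (Suc k) (Suc j) = D * perfect_shuffle m N"
    unfolding Gamma_j_eq[OF kM] D_def vl_def bk_def P_def m_def N_def by simp
  have Gc: "Gamma_j n M (Suc k) (Suc j) \<in> carrier_mat (m*N) (m*N)"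
    using Gamma_j_carrier[OF bl k] by (simp add: m_def N_def)
  have Dr: "dim_row D = m * N"
  proof -
    have "dim_row D = sum_list (map (\<lambda>p. vl p * m) [0..<P])"
      by (simp add: D_def dim_diag_block_mat comp_def perfect_shuffle_def)
    also have "\<dots> = N * m" using sl by (simp add: sum_list_mult_const ls_def)
    finally show ?thesis by simp
  qed
  have Dc: "dim_col D = m * N"
  proof -
    have "dim_col D = sum_list (map (\<lambda>p. vl p * m) [0..<P])"
      by (simp add: D_def dim_diag_block_mat comp_def perfect_shuffle_def)
    also have "\<dots> = N * m" using sl by (simp add: sum_list_mult_const ls_def)
    finally show ?thesis by simp
  qed
  have Dcar: "D \<in> carrier_mat (m*N) (m*N)" using Dr Dc by (intro carrier_matI)
  have lin: "length (concat (map Xs [0..<m])) = m * N"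
    by (simp add: length_concat comp_def lX sum_list_triv)
  define Gt where "Gt = (\<lambda>t. map (\<lambda>s. Xs s ! t) [0..<m])"
  have step1: "mvl (Gamma_j n M (Suc k) (Suc j)) (concat (map Xs [0..<m]))
      = mvl D (mvl (perfect_shuffle m N) (concat (map Xs [0..<m])))"
    unfolding G by (rule mvl_mult[OF Dcar ps_carrier lin])
  have step2: "mvl (perfect_shuffle m N) (concat (map Xs [0..<m])) = concat (map Gt [0..<N])"
  proof -
    have "mvl (perfect_shuffle m N) (concat (map Xs [0..<m])) = concat (map (\<lambda>b. map (\<lambda>a. (map Xs [0..<m])!a!b) [0..<m]) [0..<N])"
      by (rule mvl_ps) (auto simp: lX)
    also have "\<dots> = concat (map Gt [0..<N])" unfolding Gt_def
      by (intro arg_cong[where f=concat] map_cong refl) simp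
    finally show ?thesis .
  qed
  have step3: "concat (map Gt [0..<N]) =
     concat (map (\<lambda>p. concat (map (\<lambda>u. Gt (sum_list (take p ls) + u)) [0..<vl p])) [0..<P])"
  proof -
    have "map Gt [0..<sum_list ls] = concat (map (\<lambda>p. map (\<lambda>u. Gt (sum_list (take p ls) + u)) [0..<ls!p]) [0..<length ls])"
      by (rule regroup)
    moreover have "map (\<lambda>p. map (\<lambda>u. Gt (sum_list (take p ls) + u)) [0..<ls!p]) [0..<length ls]
       = map (\<lambda>p. map (\<lambda>u. Gt (sum_list (take p ls) + u)) [0..<vl p]) [0..<P]"
      by (intro map_cong) (auto simp: ls_def)
    ultimately show ?thesis unfolding sl[symmetric] by (simp add: concat_concat_map)
  qed
  have step4: "mvl D (concat (map (\<lambda>p. concat (map (\<lambda>u. Gt (sum_list (take p ls) + u)) [0..<vl p])) [0..<P]))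
     = concat (map (\<lambda>p. mvl (perfect_shuffle (vl p) m) (concat (map (\<lambda>u. Gt (sum_list (take p ls) + u)) [0..<vl p]))) [0..<P])"
  proof -
    have "mvl D (concat (map (\<lambda>p. concat (map (\<lambda>u. Gt (sum_list (take p ls) + u)) [0..<vl p])) [0..<P]))
       = concat (map2 mvl (map (\<lambda>p. perfect_shuffle (vl p) m) [0..<P]) (map (\<lambda>p. concat (map (\<lambda>u. Gt (sum_list (take p ls) + u)) [0..<vl p])) [0..<P]))"
      unfolding D_def
    proof (rule mvl_diag)
      show "\<forall>C\<in>set (map (\<lambda>p. perfect_shuffle (vl p) m) [0..<P]). dim_row C = dim_col C"
        by (auto simp: perfect_shuffle_def)
      show "map length (map (\<lambda>p. concat (map (\<lambda>u. Gt (sum_list (take p ls) + u)) [0..<vl p])) [0..<P]) =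
            map dim_row (map (\<lambda>p. perfect_shuffle (vl p) m) [0..<P])"
        by (simp add: length_concat comp_def Gt_def sum_list_triv perfect_shuffle_def)
    qed
    then show ?thesis by (simp add: map2_map_map)
  qed
  have step5: "mvl (perfect_shuffle (vl p) m) (concat (map (\<lambda>u. Gt (sum_list (take p ls) + u)) [0..<vl p]))
     = blk (take (Suc k) M) B (idx_of p bk @ [Suc j])" if p: "p < P" for p
  proof -
    have "mvl (perfect_shuffle (vl p) m) (concat (map (\<lambda>u. Gt (sum_list (take p ls) + u)) [0..<vl p]))
        = concat (map (\<lambda>s. map (\<lambda>u. Gt (sum_list (take p ls) + u) ! s) [0..<vl p]) [0..<m])"
      (is "_ = ?R")
    proof -
      have "mvl (perfect_shuffle (vl p) m) (concat (map (\<lambda>u. Gt (sum_list (take p ls) + u)) [0..<vl p]))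
        = concat (map (\<lambda>b. map (\<lambda>a. (map (\<lambda>u. Gt (sum_list (take p ls) + u)) [0..<vl p])!a!b) [0..<vl p]) [0..<m])"
        by (rule mvl_ps) (auto simp: Gt_def)
      also have "\<dots> = ?R" by (intro arg_cong[where f=concat] map_cong refl) simp
      finally show ?thesis .
    qed
    also have "\<dots> = concat (map (\<lambda>s. blk (take k M) (Bs s) (idx_of p bk)) [0..<m])"
    proof (intro arg_cong[where f=concat] map_cong refl)
      fix s assume s: "s \<in> set [0..<m]"
      define Ls where "Ls = map (\<lambda>p. blk (take k M) (Bs s) (idx_of p bk)) [0..<P]"
      have XL: "Xs s = concat Ls" by (simp add: Xs_def W_def Ls_def bk_def P_def)
      have off: "sum_list (take p ls) = sum_list (map length (take p Ls))"
        using p by (simp add: ls_def Ls_def take_map vl_def comp_def)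
      have lLs: "length (Ls!p) = vl p" using p by (simp add: Ls_def vl_def)
      have "map (\<lambda>u. Gt (sum_list (take p ls) + u) ! s) [0..<vl p] = map (\<lambda>u. Ls ! p ! u) [0..<vl p]"
      proof (intro map_cong refl)
        fix u assume u: "u \<in> set [0..<vl p]"
        have "Gt (sum_list (take p ls) + u) ! s = Xs s ! (sum_list (take p ls) + u)"
          using s by (simp add: Gt_def)
        also have "\<dots> = Ls ! p ! u" unfolding XL off
          by (rule nth_concat_off) (use p u lLs in \<open>auto simp: Ls_def\<close>)
        finally show "Gt (sum_list (take p ls) + u) ! s = Ls ! p ! u" .
      qed
      also have "\<dots> = Ls ! p" using map_nth[of "Ls!p"] lLs by simp
      finally show "map (\<lambda>u. Gt (sum_list (take p ls) + u) ! s) [0..<vl p] = blk (take k M) (Bs s) (idx_of p bk)"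
        using p by (simp add: Ls_def)
    qed
    also have "\<dots> = blk (take (Suc k) M) B (idx_of p bk @ [Suc j])"
      unfolding Bs_def off_def m_def by (rule blk_snoc[OF kM, symmetric]) (simp add: lbk)
    finally show ?thesis .
  qed
  have "mvl (Gamma_j n M (Suc k) (Suc j)) (concat (map Xs [0..<m]))
     = concat (map (\<lambda>p. blk (take (Suc k) M) B (idx_of p bk @ [Suc j])) [0..<P])"
    unfolding step1 step2 step3 step4
    by (intro arg_cong[where f=concat] map_cong refl) (simp add: step5)
  then show ?thesis by (simp add: Xs_def Bs_def off_def m_def P_def bk_def)
qed


lemma Gamma_eq: "Gamma n M (Suc k) = diag_block_mat (map (\<lambda>j. Gamma_j n M (Suc k) (Suc j)) [0..<length (M!k)])"
proof -
  have e: "[1..<length (M!k) + 1] = map Suc [0..<length (M!k)]" by (simp add: map_Suc_upt)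
  show ?thesis unfolding Gamma_def diff_Suc_1 e by (simp only: map_map comp_def)
qed

lemma Gamma_carrier:
  assumes bl: "is_blocking M n" and k: "k < length n"
  shows "Gamma n M (Suc k) \<in> carrier_mat (Nk n (Suc k)) (Nk n (Suc k))"
proof -
  let ?L = "map (\<lambda>j. Gamma_j n M (Suc k) (Suc j)) [0..<length (M!k)]"
  have s: "sum_list (map (\<lambda>j. M!k!j * Nk n k) [0..<length (M!k)]) = Nk n (Suc k)"
  proof -
    have "sum_list (map (\<lambda>j. M!k!j * Nk n k) [0..<length (M!k)]) = sum_list (map (\<lambda>j. M!k!j) [0..<length (M!k)]) * Nk n k"
      by (rule sum_list_mult_const)
    also have "map (\<lambda>j. M!k!j) [0..<length (M!k)] = M!k" by (rule map_nth)
    also have "sum_list (M!k) = n!k" using bl k by (simp add: is_blocking_def)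
    finally show ?thesis using k by (simp add: Nk_def take_Suc_conv_app_nth)
  qed
  have r: "map dim_row ?L = map (\<lambda>j. M!k!j * Nk n k) [0..<length (M!k)]"
    using Gamma_j_carrier[OF bl k] by (intro nth_equalityI) auto
  have c: "map dim_col ?L = map (\<lambda>j. M!k!j * Nk n k) [0..<length (M!k)]"
    using Gamma_j_carrier[OF bl k] by (intro nth_equalityI) auto
  show ?thesis unfolding Gamma_eq
    by (intro carrier_matI) (simp_all only: dim_diag_block_mat r c s)
qed

lemma Gamma_act:
  assumes bl: "is_blocking M n" and k: "k < length n"
  shows "mvl (Gamma n M (Suc k)) (concat (map (\<lambda>s. W (take k M) (\<lambda>x. B (x @ [Suc s]))) [0..<n!k]))
       = W (take (Suc k) M) B"
proof -
  have kM: "k < length M" using bl k by (simp add: is_blocking_def)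
  define Y where "Y = (\<lambda>s. W (take k M) (\<lambda>x. B (x @ [Suc s])))"
  define b where "b = length (M!k)"
  define off where "off = (\<lambda>j. sum_list (take j (M!k)))"
  have nk: "n!k = sum_list (M!k)" using bl k by (simp add: is_blocking_def)
  have lY: "length (Y s) = Nk n k" for s using length_W[OF bl, of k] k by (simp add: Y_def)
  have "map Y [0..<sum_list (M!k)] = concat (map (\<lambda>j. map (\<lambda>s. Y (off j + s)) [0..<M!k!j]) [0..<b])"
    unfolding off_def b_def by (rule regroup)
  then have e1: "concat (map Y [0..<n!k]) = concat (map (\<lambda>j. concat (map (\<lambda>s. Y (off j + s)) [0..<M!k!j])) [0..<b])"
    unfolding nk by (simp add: concat_concat_map)
  have "mvl (Gamma n M (Suc k)) (concat (map Y [0..<n!k]))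
     = concat (map2 mvl (map (\<lambda>j. Gamma_j n M (Suc k) (Suc j)) [0..<b]) (map (\<lambda>j. concat (map (\<lambda>s. Y (off j + s)) [0..<M!k!j])) [0..<b]))"
    unfolding e1 Gamma_eq b_def[symmetric]
  proof (rule mvl_diag)
    show "\<forall>C\<in>set (map (\<lambda>j. Gamma_j n M (Suc k) (Suc j)) [0..<b]). dim_row C = dim_col C"
    proof
      fix C assume "C \<in> set (map (\<lambda>j. Gamma_j n M (Suc k) (Suc j)) [0..<b])"
      then obtain j where "C = Gamma_j n M (Suc k) (Suc j)" by auto
      then have "C \<in> carrier_mat (M!k!j * Nk n k) (M!k!j * Nk n k)" using Gamma_j_carrier[OF bl k] by simp
      then show "dim_row C = dim_col C" by (simp add: carrier_matD)
    qed
    show "map length (map (\<lambda>j. concat (map (\<lambda>s. Y (off j + s)) [0..<M!k!j])) [0..<b]) =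
          map dim_row (map (\<lambda>j. Gamma_j n M (Suc k) (Suc j)) [0..<b])"
    proof -
      have dr: "dim_row (Gamma_j n M (Suc k) (Suc j)) = M!k!j * Nk n k" for j
        by (rule carrier_matD(1)[OF Gamma_j_carrier[OF bl k]])
      show ?thesis by (intro nth_equalityI) (auto simp: length_concat comp_def lY sum_list_triv dr)
    qed
  qed
  also have "\<dots> = concat (map (\<lambda>j. mvl (Gamma_j n M (Suc k) (Suc j)) (concat (map (\<lambda>s. Y (off j + s)) [0..<M!k!j]))) [0..<b])"
    by (simp add: map2_map_map)
  also have "\<dots> = concat (map (\<lambda>j. concat (map (\<lambda>p. blk (take (Suc k) M) B (idx_of p (nblocks (take k M)) @ [Suc j])) [0..<prod_list (nblocks (take k M))])) [0..<b])"
  proof (intro arg_cong[where f=concat] map_cong refl)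
    fix j assume j: "j \<in> set [0..<b]"
    have jj: "j < length (M!k)" using j by (simp add: b_def)
    have me: "map (\<lambda>s. Y (off j + s)) [0..<M!k!j] = map (\<lambda>s. W (take k M) (\<lambda>x. B (x @ [sum_list (take j (M!k)) + Suc s]))) [0..<M!k!j]"
      by (simp add: Y_def off_def)
    show "mvl (Gamma_j n M (Suc k) (Suc j)) (concat (map (\<lambda>s. Y (off j + s)) [0..<M!k!j])) =
       concat (map (\<lambda>p. blk (take (Suc k) M) B (idx_of p (nblocks (take k M)) @ [Suc j])) [0..<prod_list (nblocks (take k M))])"
      unfolding me by (rule Gamma_j_act[OF bl k jj])
  qed
  also have "\<dots> = W (take (Suc k) M) B" unfolding b_def by (rule W_snoc[OF kM, symmetric])
  finally show ?thesis by (simp add: Y_def)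
qed



definition V :: "nat list \<Rightarrow> nat list list \<Rightarrow> (nat list \<Rightarrow> real) \<Rightarrow> nat \<Rightarrow> real list" where
  "V n M A k = concat (map (\<lambda>t. W (take k M) (\<lambda>x. A (x @ idx_of t (drop k n)))) [0..<prod_list (drop k n)])"

lemma V_step:
  assumes bl: "is_blocking M n" and k: "k < length n"
  shows "mvl (kron (1\<^sub>m (prod_list (drop (Suc k) n))) (Gamma n M (Suc k))) (V n M A k) = V n M A (Suc k)"
proof -
  define T where "T = prod_list (drop (Suc k) n)"
  define nk where "nk = n!k"
  define F where "F = (\<lambda>t. W (take k M) (\<lambda>x. A (x @ idx_of t (drop k n))))"
  define Bt where "Bt = (\<lambda>t' y. A (y @ idx_of t' (drop (Suc k) n)))"
  have dk: "drop k n = nk # drop (Suc k) n" using k by (simp add: nk_def Cons_nth_drop_Suc)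
  have "V n M A k = concat (map F [0..<T * nk])"
    unfolding V_def F_def T_def using dk by (simp add: mult.commute)
  also have "map F [0..<T * nk] = concat (map (\<lambda>t'. map (\<lambda>s. F (s + t' * nk)) [0..<nk]) [0..<T])"
    by (rule map_range_split)
  also have "\<dots> = concat (map (\<lambda>t'. map (\<lambda>s. W (take k M) (\<lambda>x. Bt t' (x @ [Suc s]))) [0..<nk]) [0..<T])"
  proof (intro arg_cong[where f=concat] map_cong refl)
    fix t' s assume s: "s \<in> set [0..<nk]"
    have "idx_of (s + t' * nk) (drop k n) = Suc s # idx_of t' (drop (Suc k) n)"
      unfolding dk using idx_of_cons[of s nk t' "drop (Suc k) n"] s by simp
    then show "F (s + t' * nk) = W (take k M) (\<lambda>x. Bt t' (x @ [Suc s]))"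
      by (simp add: F_def Bt_def)
  qed
  finally have Vk: "V n M A k = concat (map (\<lambda>t'. concat (map (\<lambda>s. W (take k M) (\<lambda>x. Bt t' (x @ [Suc s]))) [0..<nk])) [0..<T])"
    by (simp add: concat_concat_map)
  have lW: "length (W (take k M) B) = Nk n k" for B using length_W[OF bl, of k] k by simp
  have NS: "Nk n (Suc k) = nk * Nk n k" using k by (simp add: Nk_def take_Suc_conv_app_nth nk_def)
  have "mvl (kron (1\<^sub>m T) (Gamma n M (Suc k))) (V n M A k)
      = concat (map (mvl (Gamma n M (Suc k))) (map (\<lambda>t'. concat (map (\<lambda>s. W (take k M) (\<lambda>x. Bt t' (x @ [Suc s]))) [0..<nk])) [0..<T]))"
    unfolding Vk
  proof (rule mvl_kron[OF Gamma_carrier[OF bl k]])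
    show "length (map (\<lambda>t'. concat (map (\<lambda>s. W (take k M) (\<lambda>x. Bt t' (x @ [Suc s]))) [0..<nk])) [0..<T]) = T" by simp
    show "\<forall>w\<in>set (map (\<lambda>t'. concat (map (\<lambda>s. W (take k M) (\<lambda>x. Bt t' (x @ [Suc s]))) [0..<nk])) [0..<T]). length w = Nk n (Suc k)"
      by (auto simp: length_concat comp_def lW sum_list_triv NS)
  qed
  also have "\<dots> = concat (map (\<lambda>t'. W (take (Suc k) M) (Bt t')) [0..<T])"
    unfolding map_map comp_def
  proof (intro arg_cong[where f=concat] map_cong refl)
    fix t'
    show "mvl (Gamma n M (Suc k)) (concat (map (\<lambda>s. W (take k M) (\<lambda>x. Bt t' (x @ [Suc s]))) [0..<nk])) = W (take (Suc k) M) (Bt t')"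
      unfolding nk_def by (rule Gamma_act[OF bl k])
  qed
  also have "\<dots> = V n M A (Suc k)" by (simp add: V_def Bt_def T_def)
  finally show ?thesis by (simp add: T_def)
qed

lemma blk_nil: "blk [] B [] = [B []]"
  by (simp add: blk_eq vol_def bsize_def)

lemma V0: "V n M A 0 = list_of_vec (tvec A n)"
  unfolding V_def tvec_def
  by (simp add: W_def nblocks_def blk_nil map_concat comp_def concat_map_singleton)

lemma W_one:
  assumes bl: "is_blocking M n" and d: "0 < length n"
  shows "W (take 1 M) B = map (\<lambda>x. B [Suc x]) [0..<n!0]"
proof -
  have kM: "0 < length M" using bl d by (simp add: is_blocking_def)
  have "W (take (Suc 0) M) B = concat (map (\<lambda>j. concat (map (\<lambda>p. blk (take (Suc 0) M) B (idx_of p (nblocks (take 0 M)) @ [Suc j])) [0..<prod_list (nblocks (take 0 M))])) [0..<length (M!0)])"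
    by (rule W_snoc[OF kM])
  also have "\<dots> = concat (map (\<lambda>j. blk (take (Suc 0) M) B ([] @ [Suc j])) [0..<length (M!0)])"
    by (simp add: nblocks_def)
  also have "\<dots> = concat (map (\<lambda>j. map (\<lambda>s. B [sum_list (take j (M!0)) + Suc s]) [0..<M!0!j]) [0..<length (M!0)])"
  proof (intro arg_cong[where f=concat] map_cong refl)
    fix j
    show "blk (take (Suc 0) M) B ([] @ [Suc j]) = map (\<lambda>s. B [sum_list (take j (M!0)) + Suc s]) [0..<M!0!j]"
      using blk_snoc[OF kM, of "[]" B j] by (simp add: blk_nil concat_map_singleton)
  qed
  also have "\<dots> = map (\<lambda>x. B [Suc x]) [0..<sum_list (M!0)]"
    using regroup[of "\<lambda>x. B [Suc x]" "M!0"] by simp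
  also have "sum_list (M!0) = n!0" using bl d by (simp add: is_blocking_def)
  finally show ?thesis by simp
qed

lemma V1:
  assumes bl: "is_blocking M n" and d: "0 < length n"
  shows "V n M A 1 = V n M A 0"
proof -
  define T where "T = prod_list (drop 1 n)"
  have dn: "n = n!0 # drop 1 n" using d by (simp add: Cons_nth_drop_Suc)
  have pn: "prod_list n = T * n!0" unfolding T_def by (subst dn) simp
  have "V n M A 1 = concat (map (\<lambda>t. map (\<lambda>x. A ([Suc x] @ idx_of t (drop 1 n))) [0..<n!0]) [0..<T])"
    unfolding V_def T_def W_one[OF bl d] by simp
  also have "\<dots> = concat (map (\<lambda>t. map (\<lambda>x. A (idx_of (x + t * n!0) n)) [0..<n!0]) [0..<T])"
  proof (intro arg_cong[where f=concat] map_cong refl)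
    fix t x assume x: "x \<in> set [0..<n!0]"
    have "idx_of (x + t * n!0) (n!0 # drop 1 n) = Suc x # idx_of t (drop 1 n)"
      using idx_of_cons[of x "n!0" t "drop 1 n"] x by simp
    then show "A ([Suc x] @ idx_of t (drop 1 n)) = A (idx_of (x + t * n!0) n)"
      using dn by simp
  qed
  also have "\<dots> = map (\<lambda>q. A (idx_of q n)) [0..<T * n!0]"
    by (rule map_range_split[symmetric])
  also have "\<dots> = V n M A 0" unfolding V0 tvec_def pn by simp
  finally show ?thesis .
qed



lemma prod_list_pos: "\<forall>x\<in>set xs. 0 < (x::nat) \<Longrightarrow> 0 < prod_list xs"
  by (induction xs) auto

lemma Nk_full: "Nk n (length n) = prod_list n"
  by (simp add: Nk_def)

lemma Qk_eq:
  assumes pos: "\<forall>k<length n. 0 < n!k" and k1: "1 \<le> k" and k: "k < length n"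
  shows "Qk n M (Suc k) = kron (1\<^sub>m (prod_list (drop (Suc k) n))) (Gamma n M (Suc k))"
proof -
  have "\<forall>x\<in>set (take (Suc k) n). 0 < x"
  proof
    fix x assume "x \<in> set (take (Suc k) n)"
    then have "x \<in> set n" by (rule in_set_takeD)
    then obtain i where "i < length n" "x = n!i" by (auto simp: in_set_conv_nth)
    then show "0 < x" using pos by simp
  qed
  then have p: "0 < Nk n (Suc k)" unfolding Nk_def by (rule prod_list_pos)
  have "Nk n (length n) = Nk n (Suc k) * prod_list (drop (Suc k) n)"
    unfolding Nk_full Nk_def using prod_take_drop[of n "Suc k"] by simp
  then have "Nk n (length n) div Nk n (Suc k) = prod_list (drop (Suc k) n)" using p by simp
  then show ?thesis using k1 by (simp add: Qk_def)
qed

lemma Qk_carrier: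
  assumes bl: "is_blocking M n" and pos: "\<forall>k<length n. 0 < n!k" and k1: "1 \<le> k" and k: "k < length n"
  shows "Qk n M (Suc k) \<in> carrier_mat (prod_list n) (prod_list n)"
proof -
  have "prod_list n = prod_list (drop (Suc k) n) * Nk n (Suc k)"
    unfolding Nk_def using prod_take_drop[of n "Suc k"] by simp
  then show ?thesis unfolding Qk_eq[OF pos k1 k] using kron_carrier[OF Gamma_carrier[OF bl k]] by simp
qed

lemma length_V0: "length (V n M A 0) = prod_list n"
  by (simp add: V0 tvec_def)

lemma Qprod_V:
  assumes bl: "is_blocking M n" and pos: "\<forall>k<length n. 0 < n!k"
  shows "1 \<le> k \<Longrightarrow> k \<le> length n \<Longrightarrow>
    Qprod n M k \<in> carrier_mat (prod_list n) (prod_list n) \<and> mvl (Qprod n M k) (V n M A 0) = V n M A k"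
proof (induction k)
  case 0 then show ?case by simp
next
  case (Suc k)
  show ?case
  proof (cases k)
    case 0
    have "Qprod n M (Suc k) = 1\<^sub>m (prod_list n)" using 0 by (simp add: Qk_def Nk_full)
    moreover have "mvl (1\<^sub>m (prod_list n)) (V n M A 0) = V n M A 0"
      using mvl_one[of "V n M A 0"] by (simp add: length_V0)
    moreover have "V n M A (Suc k) = V n M A 0"
    proof -
      have "0 < length n" using Suc.prems(2) by linarith
      then show ?thesis using 0 V1[OF bl] by simp
    qed
    ultimately show ?thesis by simp
  next
    case (Suc k')
    have IH: "Qprod n M k \<in> carrier_mat (prod_list n) (prod_list n) \<and> mvl (Qprod n M k) (V n M A 0) = V n M A k"
      using Suc.IH Suc.prems Suc by simp
    have k1: "1 \<le> k" and kn: "k < length n" using Suc Suc.prems by auto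
    have Q: "Qprod n M (Suc k) = Qk n M (Suc k) * Qprod n M k" using Suc by simp
    have Qc: "Qk n M (Suc k) \<in> carrier_mat (prod_list n) (prod_list n)" by (rule Qk_carrier[OF bl pos k1 kn])
    have "mvl (Qprod n M (Suc k)) (V n M A 0) = mvl (Qk n M (Suc k)) (mvl (Qprod n M k) (V n M A 0))"
      unfolding Q using IH Qc length_V0 by (intro mvl_mult) auto
    also have "\<dots> = V n M A (Suc k)" using IH V_step[OF bl kn] unfolding Qk_eq[OF pos k1 kn] by simp
    finally show ?thesis using Q Qc IH by simp
  qed
qed

theorem theorem3p1:
  fixes n :: "nat list" and M :: "nat list list" and A :: "nat list \<Rightarrow> real"
  assumes "length n \<ge> 1"
    and "\<forall>k<length n. 0 < n!k"
    and "is_blocking M n"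
  shows "vecM A M = PM n M *\<^sub>v tvec A n"
proof -
  have QV: "mvl (Qprod n M (length n)) (V n M A 0) = V n M A (length n)"
    using Qprod_V[OF assms(3,2), of "length n"] assms(1) by simp
  have lM: "length M = length n" using assms(3) by (simp add: is_blocking_def)
  have "V n M A (length n) = W M A" by (simp add: V_def lM[symmetric])
  moreover have "tvec A n = vec_of_list (V n M A 0)" by (simp add: V0 vec_list)
  ultimately have "list_of_vec (PM n M *\<^sub>v tvec A n) = W M A"
    using QV unfolding PM_def mvl_def by simp
  then have "vec_of_list (list_of_vec (PM n M *\<^sub>v tvec A n)) = vec_of_list (W M A)" by simp
  then have "PM n M *\<^sub>v tvec A n = vec_of_list (W M A)" by (simp only: vec_list)
  then show ?thesis by (simp add: vecM_W)
qed


end
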